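(* Let $d\ge 3$ and $0\le j\le \left\lfloor \frac{3(d-1)}{2}\right\rfloor$. The $S_3$-invariant elements of $\operatorname{Ker}(E)\cap A(d)_j$ are exactly the elements $P=\sum_{\lambda\in\mathscr{P}_{3,d-1}(j)}\alpha_\lambda[x^\lambda]$ ($\alpha_\lambda\in\Bbbk$) with $E(P)=0$, and the multiplicity of the trivial representation in $\operatorname{Ker}(E)\cap A(d)_j$ is $$\operatorname{triv}(d,j)=p_{3,d-1}(j)-p_{3,d-1}(j-1).$$
   Context: $\Bbbk$ is an algebraically closed field of characteristic $0$. For an integer $d\ge 1$, $A(d)=\Bbbk[x_1,x_2,x_3]/(x_1^d,x_2^d,x_3^d)=\bigoplus_j A(d)_j$ with its standard grading ($A(d)_j=0$ for $j<0$). The symmetric group $S_3$ acts on $A(d)$ by permuting the variables. The linear map $E:A(d)_{j+1}\to A(d)_j$ is defined on the monomial basis by $E(x_1^{a_1}x_2^{a_2}x_3^{a_3})=\sum_{k=1}^{3} a_k(d-a_k)\,x_1^{a_1}\cdots x_k^{a_k-1}\cdots x_3^{a_3}$; it commutes with the $S_3$-action, so $\operatorname{Ker}(E)\cap A(d)_j$ is an $S_3$-module. $\operatorname{triv}(d,j)$ denotes the multiplicity of the trivial representation in $\operatorname{Ker}(E)\cap A(d)_j$. For integers $l\ge0$, $n$: $\mathscr{P}_{3,l}(n)$ is the set of integer triples $(a,b,c)$ with $l\ge a\ge b\ge c\ge 0$, $a+b+c=n$, and $p_{3,l}(n)=|\mathscr{P}_{3,l}(n)|$ ($=0$ for $n<0$).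 For $\lambda=(a,b,c)$, $[x^\lambda]$ denotes the sum of the distinct monomials in the $S_3$-orbit of $x_1^ax_2^bx_3^c$. *)

theory Defs
  imports "HOL-Computational_Algebra.Polynomial" "HOL-Combinatorics.Permutations" "HOL-Library.Function_Algebras"
begin

text \<open>Elements of A(d) = k[x_0,x_1,x_2]/(x_0^d,x_1^d,x_2^d) are represented by their
coefficient functions on exponent vectors e :: nat => nat (only e 0, e 1, e 2 matter;
the basis monomials are those with e i < d for i<3 and e i = 0 for i >= 3).\<close>

definition mons :: "nat \<Rightarrow> nat \<Rightarrow> (nat \<Rightarrow> nat) set" where
  "mons d j = {e. (\<forall>i\<ge>3. e i = 0) \<and> (\<forall>i<3. e i < d) \<and> e 0 + e 1 + e 2 = j}"

definition Adeg :: "nat \<Rightarrow> nat \<Rightarrow> ((nat \<Rightarrow> nat) \<Rightarrow> 'k::field) set" where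
  "Adeg d j = {f. \<forall>e. e \<notin> mons d j \<longrightarrow> f e = 0}"

text \<open>The operator E: E(x^a) = sum_k a_k (d - a_k) x^(a - e_k); coefficient form.\<close>
definition Eop :: "nat \<Rightarrow> ((nat \<Rightarrow> nat) \<Rightarrow> 'k::field) \<Rightarrow> ((nat \<Rightarrow> nat) \<Rightarrow> 'k)" where
  "Eop d f = (\<lambda>e. \<Sum>k<3. of_nat ((e k + 1) * (d - (e k + 1))) * f (e(k := e k + 1)))"

text \<open>S_3 action by permuting variables: sigma sends x_i to x_(sigma i).\<close>
definition perm_act :: "(nat \<Rightarrow> nat) \<Rightarrow> ((nat \<Rightarrow> nat) \<Rightarrow> 'k::field) \<Rightarrow> ((nat \<Rightarrow> nat) \<Rightarrow> 'k)" where
  "perm_act \<sigma> f = (\<lambda>e. f (e \<circ> \<sigma>))"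

definition S3_invariant :: "((nat \<Rightarrow> nat) \<Rightarrow> 'k::field) \<Rightarrow> bool" where
  "S3_invariant f \<longleftrightarrow> (\<forall>\<sigma>. \<sigma> permutes {0..<3} \<longrightarrow> perm_act \<sigma> f = f)"

definition expvec :: "nat \<times> nat \<times> nat \<Rightarrow> (nat \<Rightarrow> nat)" where
  "expvec lam = (case lam of (a, b, c) \<Rightarrow>
      (\<lambda>i. if i = 0 then a else if i = 1 then b else if i = 2 then c else 0))"

text \<open>[x^lambda]: the sum of the distinct monomials in the S_3-orbit of x^lambda.\<close>
definition orbsum :: "nat \<times> nat \<times> nat \<Rightarrow> ((nat \<Rightarrow> nat) \<Rightarrow> 'k::field)" where
  "orbsum lam = (\<lambda>e. if e \<in> {expvec lam \<circ> \<sigma> | \<sigma>. \<sigma> permutes {0..<3}} then 1 else 0)"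

definition Part3 :: "nat \<Rightarrow> int \<Rightarrow> (nat \<times> nat \<times> nat) set" where
  "Part3 l n = {(a, b, c). l \<ge> a \<and> a \<ge> b \<and> b \<ge> c \<and> int (a + b + c) = n}"

definition p3 :: "nat \<Rightarrow> int \<Rightarrow> nat" where
  "p3 l n = card (Part3 l n)"

definition fscale :: "'k::field \<Rightarrow> ('a \<Rightarrow> 'k) \<Rightarrow> ('a \<Rightarrow> 'k)" where
  "fscale c f = (\<lambda>x. c * f x)"

text \<open>Multiplicity of the trivial representation in Ker(E) \<inter> A(d)_j, i.e. the dimension
of the subspace of S_3-invariant elements (char 0).\<close>
definition triv :: "'k::field itself \<Rightarrow> nat \<Rightarrow> nat \<Rightarrow> nat" where
  "triv _ d j = vector_space.dim (fscale :: 'k \<Rightarrow> _)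
      {f :: (nat \<Rightarrow> nat) \<Rightarrow> 'k. f \<in> Adeg d j \<and> Eop d f = (\<lambda>_. 0) \<and> S3_invariant f}"

end

theory Submission
  imports Defs
begin


lemma sum_app: "(\<Sum>x\<in>S. f x) (e::'a) = (\<Sum>x\<in>S. (f x e :: 'b::comm_monoid_add))"
  by (induction S rule: infinite_finite_induct) auto

global_interpretation fsv: vector_space "fscale :: 'k::field \<Rightarrow> ('a \<Rightarrow> 'k) \<Rightarrow> ('a \<Rightarrow> 'k)"
  by unfold_locales (auto simp: fscale_def fun_eq_iff algebra_simps)

context vector_space begin

lemma inj_on_ext:
  assumes lf: "Vector_Spaces.linear scale scale f"
  and ind_C: "independent C"
  and C_eq: "C = B \<union> W"
  and disj_set: "B \<inter> W = {}"
  and span_B: "{x\<in>span C. f x = 0} \<subseteq> span B"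
  shows "inj_on f W"
proof (unfold inj_on_def, rule+, rule ccontr)
  interpret lf: Vector_Spaces.linear scale scale f using lf by simp
  fix x y
  assume x: "x \<in> W" and y: "y \<in> W" and f_eq: "f x = f y" and x_not_y: "x \<noteq> y"
  have "f (x - y) = 0" by (metis diff_self f_eq lf.diff)
  moreover have "x - y \<in> span C" using x y C_eq by (simp add: span_base span_diff)
  ultimately have "x - y \<in> span B" using span_B by auto
  have yy: "y \<in> span (insert y B)" by (rule span_base) simp
  have "x - y \<in> span (insert y B)" using \<open>x - y \<in> span B\<close> span_mono[of B "insert y B"] by blast
  then have "y + (x - y) \<in> span (insert y B)" using yy span_add by blast
  then have xs: "x \<in> span (insert y B)" by simp
  have "insert y B \<subseteq> C - {x}" using x y x_not_y disj_set C_eq by auto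
  then have "x \<in> span (C - {x})" using xs span_mono by blast
  moreover have "x \<in> C" using x C_eq by auto
  ultimately have "dependent C" unfolding dependent_def by blast
  thus False using ind_C by contradiction
qed

lemma rank_nullity_sub:
  assumes l: "Vector_Spaces.linear scale scale f" and fM: "finite M"
  shows "dim (span M) = dim {x\<in>span M. f x = 0} + dim (f ` span M)"
proof -
  interpret l: Vector_Spaces.linear scale scale f by fact
  let ?K = "{x\<in>span M. f x = 0}"
  obtain B where B_in_ker: "B \<subseteq> ?K" and independent_B: "independent B"
    and ker_in_span:"?K \<subseteq> span B" and card_B: "card B = dim ?K" using basis_exists by blast
  obtain C where B_in_C: "B \<subseteq> C" and C_in_V: "C \<subseteq> span M"
    and independent_C: "independent C" and span_C: "span M \<subseteq> span C"
    using maximal_independent_subset_extend[of B "span M"] B_in_ker independent_B by blast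
  have spC: "span C = span M"
    using C_in_V span_C by (metis span_minimal subspace_span subset_antisym)
  have finite_C: "finite C" using independent_span_bound[OF fM independent_C] C_in_V by auto
  have finite_B: "finite B" using finite_C B_in_C finite_subset by auto
  define W where "W = C - B"
  have C_eq: "C = B \<union> W" using B_in_C W_def by auto
  have finite_W: "finite W" using finite_C W_def by auto
  have injW: "inj_on f W"
    by (rule inj_on_ext[OF l independent_C C_eq]) (use W_def ker_in_span spC in auto)
  have e1: "dim (span M) = card C" using basis_card_eq_dim[of C "span M"] C_in_V span_C independent_C by auto
  have e2: "card C = card B + card W"
  proof -
    have "card (B \<union> W) = card B + card W" using finite_B finite_W unfolding W_def by (intro card_Un_disjoint) auto
    then show ?thesis by (metis C_eq)
  qed
  have e3: "card W = card (f ` W)" using card_image[OF injW] by simp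
  have e4: "card (f ` W) = dim (f ` span M)"
  proof (rule basis_card_eq_dim)
    show "f ` W \<subseteq> f ` span M" using C_in_V W_def by auto
    have "f ` span M = span (f ` C)" using spC l.span_image by metis
    also have "\<dots> \<subseteq> span (f ` W)"
    proof (rule span_minimal[OF _ subspace_span])
      show "f ` C \<subseteq> span (f ` W)"
      proof
        fix z assume "z \<in> f ` C"
        then obtain c where c: "c \<in> C" "z = f c" by auto
        show "z \<in> span (f ` W)"
        proof (cases "c \<in> B")
          case True then have "f c = 0" using B_in_ker by auto
          then show ?thesis using c span_zero by auto
        next
          case False then show ?thesis using c W_def by (auto intro: span_base)
        qed
      qed
    qed
    finally show "f ` span M \<subseteq> span (f ` W)" .
    show "independent (f ` W)"
    proof (rule independent_if_scalars_zero)
      show "finite (f ` W)" using finite_W by auto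
      fix g w assume sum: "(\<Sum>x\<in>f ` W. g x *s x) = 0" and w: "w \<in> f ` W"
      have "0 = (\<Sum>x\<in>f ` W. g x *s x)" using sum by simp
      also have "\<dots> = (\<Sum>x\<in>W. g (f x) *s f x)" by (rule sum.reindex_cong[OF injW]) auto
      also have "\<dots> = f (\<Sum>x\<in>W. g (f x) *s x)" by (simp add: l.sum l.scale)
      finally have "(\<Sum>x\<in>W. g (f x) *s x) \<in> ?K"
        using C_in_V W_def by (auto intro!: span_sum span_scale intro: span_base)
      hence "(\<Sum>x\<in>W. g (f x) *s x) \<in> span B" using ker_in_span by auto
      then obtain h where h: "(\<Sum>v\<in>B. h v *s v) = (\<Sum>x\<in>W. g (f x) *s x)"
        using span_finite[OF finite_B] by auto
      define t where "t a = (if a \<in> B then h a else - g (f a))" for a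
      have "(\<Sum>v\<in>B \<union> W. t v *s v) = (\<Sum>v\<in>B. t v *s v) + (\<Sum>v\<in>W. t v *s v)"
        using finite_B finite_W unfolding W_def by (intro sum.union_disjoint) auto
      then have "(\<Sum>v\<in>C. t v *s v) = (\<Sum>v\<in>B. t v *s v) + (\<Sum>v\<in>W. t v *s v)"
        by (metis C_eq)
      also have "(\<Sum>v\<in>B. t v *s v) = (\<Sum>v\<in>B. h v *s v)" by (auto simp: t_def intro!: sum.cong)
      also have "(\<Sum>v\<in>W. t v *s v) = - (\<Sum>x\<in>W. g (f x) *s x)"
        unfolding sum_negf[symmetric] by (rule sum.cong) (auto simp: t_def W_def)
      finally have "(\<Sum>v\<in>C. t v *s v) = 0" using h by simp
      then have allC: "\<forall>v\<in>C. t v = 0" using independent_C unfolding dependent_finite[OF finite_C] by auto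
      obtain y where y: "w = f y" "y \<in> W" using w by auto
      have yC: "y \<in> C" "y \<notin> B" using y(2) unfolding W_def by auto
      have "t y = 0" using allC yC(1) by simp
      then show "g w = 0" using \<open>y \<notin> B\<close> y(1) by (simp add: t_def)
    qed
  qed
  show ?thesis unfolding e1 e2 e3 e4 card_B ..
qed

lemma span_eq_card:
  assumes "finite M" "independent M" "independent T" "T \<subseteq> span M" "card T = card M"
  shows "span M \<subseteq> span T"
proof
  fix x assume x: "x \<in> span M"
  show "x \<in> span T"
  proof (rule ccontr)
    assume "x \<notin> span T"
    then have i: "independent (insert x T)" using assms(3) independent_insertI by auto
    have "insert x T \<subseteq> span M" using x assms(4) by auto
    from independent_span_bound[OF assms(1) i this] have "finite (insert x T) \<and> card (insert x T) \<le> card M" .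
    moreover have "x \<notin> T" using \<open>x \<notin> span T\<close> span_base by auto
    ultimately show False using assms(5) by auto
  qed
qed

end


definition orbit :: "nat \<times> nat \<times> nat \<Rightarrow> (nat \<Rightarrow> nat) set" where
  "orbit lam = {expvec lam \<circ> \<sigma> | \<sigma>. \<sigma> permutes {0..<3}}"

lemma orbsum_orbit: "orbsum lam e = (if e \<in> orbit lam then 1 else 0)"
  unfolding orbsum_def orbit_def by simp

lemma expvec_simps[simp]: "expvec (a,b,c) 0 = a" "expvec (a,b,c) (Suc 0) = b" "expvec (a,b,c) 2 = c" "expvec (a,b,c) (Suc (Suc 0)) = c"
  "i \<ge> 3 \<Longrightarrow> expvec (a,b,c) i = 0"
  by (auto simp: expvec_def)

lemma sum3: "(\<Sum>i<3. f i) = f 0 + f (Suc 0) + (f 2 :: 'a::comm_monoid_add)"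
  by (simp add: numeral_3_eq_3 numeral_2_eq_2 add.assoc)

lemma sum03: "(\<Sum>i\<in>{0..<3}. f i) = f 0 + f (Suc 0) + (f 2 :: 'a::comm_monoid_add)"
  using sum3[of f] by (simp add: lessThan_atLeast0)

lemma finite_Part3: "finite (Part3 l n)"
proof -
  have "Part3 l n \<subseteq> {0..l} \<times> {0..l} \<times> {0..l}" unfolding Part3_def by auto
  then show ?thesis by (rule finite_subset) auto
qed

lemma perm3_cases: assumes "\<rho> permutes {0..<3::nat}" "i < 3" shows "\<rho> i = 0 \<or> \<rho> i = 1 \<or> \<rho> i = 2"
proof -
  have "\<rho> i \<in> {0..<3}" using assms permutes_in_image by fastforce
  then show ?thesis by auto
qed

lemma perm_sum_expvec: assumes "\<rho> permutes {0..<3}"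
  shows "(\<Sum>i\<in>{0..<3}. (f \<circ> \<rho>) i) = (\<Sum>i\<in>{0..<3}. (f i::nat))"
  using sum.permute[OF assms, of f] by simp

lemma orbit_mons:
  assumes "lam \<in> Part3 (d - 1) (int j)" "d \<ge> 1" "e \<in> orbit lam"
  shows "e \<in> mons d j"
proof -
  obtain a b c where l: "lam = (a,b,c)" by (cases lam) auto
  obtain \<sigma> where s: "\<sigma> permutes {0..<3}" "e = expvec lam \<circ> \<sigma>" using assms(3) unfolding orbit_def by auto
  have abc: "a \<le> d - 1" "b \<le> a" "c \<le> b" "a + b + c = j" using assms(1) l unfolding Part3_def by auto
  have "\<forall>i\<ge>3. e i = 0" using s l permutes_not_in[OF s(1)] by auto
  moreover have "\<forall>i<3. e i < d"
  proof (intro allI impI)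
    fix i assume "i < (3::nat)"
    then have "\<sigma> i = 0 \<or> \<sigma> i = 1 \<or> \<sigma> i = 2" using perm3_cases s(1) by blast
    then show "e i < d" using s l abc assms(2) by auto
  qed
  moreover have "e 0 + e 1 + e 2 = j"
  proof -
    have "(\<Sum>i\<in>{0..<3}. (expvec lam \<circ> \<sigma>) i) = (\<Sum>i\<in>{0..<3}. expvec lam i)"
      by (rule perm_sum_expvec[OF s(1)])
    then show ?thesis using s l abc by (simp add: sum03)
  qed
  ultimately show ?thesis unfolding mons_def by auto
qed

lemma orbit_perm_iff:
  assumes "\<sigma> permutes {0..<3}"
  shows "(e \<circ> \<sigma> \<in> orbit lam) = (e \<in> orbit lam)"
proof
  assume "e \<in> orbit lam"
  then obtain \<tau> where t: "\<tau> permutes {0..<3}" "e = expvec lam \<circ> \<tau>" unfolding orbit_def by auto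
  then have "e \<circ> \<sigma> = expvec lam \<circ> (\<tau> \<circ> \<sigma>)" by (simp add: comp_assoc)
  moreover have "\<tau> \<circ> \<sigma> permutes {0..<3}" using t(1) assms permutes_compose by blast
  ultimately show "e \<circ> \<sigma> \<in> orbit lam" unfolding orbit_def by blast
next
  assume "e \<circ> \<sigma> \<in> orbit lam"
  then obtain \<tau> where t: "\<tau> permutes {0..<3}" "e \<circ> \<sigma> = expvec lam \<circ> \<tau>" unfolding orbit_def by auto
  have "e = e \<circ> \<sigma> \<circ> inv \<sigma>" using permutes_inv_o(1)[OF assms] by (simp add: comp_assoc)
  then have "e = expvec lam \<circ> (\<tau> \<circ> inv \<sigma>)" using t by (simp add: comp_assoc)
  moreover have "\<tau> \<circ> inv \<sigma> permutes {0..<3}" using t(1) permutes_inv[OF assms] permutes_compose by blast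
  ultimately show "e \<in> orbit lam" unfolding orbit_def by blast
qed

lemma sorted_bounds:
  assumes "\<rho> permutes {0..<3}" "a \<ge> b" "b \<ge> c" "i < 3"
  shows "c \<le> expvec (a,b,c) (\<rho> i) \<and> expvec (a,b,c) (\<rho> i) \<le> a"
  using perm3_cases[OF assms(1,4)] assms by auto

lemma orbit_unique_aux:
  assumes "\<rho> permutes {0..<3}" "expvec (a,b,c) = expvec (a',b',c') \<circ> \<rho>"
    "a' \<ge> b'" "b' \<ge> c'"
  shows "a \<le> a' \<and> c' \<le> c \<and> a + b + c = a' + b' + c'"
proof -
  have "a = expvec (a',b',c') (\<rho> 0)" "c = expvec (a',b',c') (\<rho> 2)"
    using assms(2) by (metis comp_apply expvec_simps)+
  then have 1: "a \<le> a'" "c' \<le> c" using sorted_bounds[OF assms(1,3,4)] by (metis zero_less_numeral, metis lessI numeral_2_eq_2 numeral_3_eq_3)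
  have "(\<Sum>i\<in>{0..<3}. (expvec (a',b',c') \<circ> \<rho>) i) = (\<Sum>i\<in>{0..<3}. expvec (a',b',c') i)"
    by (rule perm_sum_expvec[OF assms(1)])
  moreover have "\<forall>i. expvec (a,b,c) i = expvec (a',b',c') (\<rho> i)" using assms(2) by (simp add: fun_eq_iff)
  then have "a = expvec (a',b',c') (\<rho> 0)" "b = expvec (a',b',c') (\<rho> 1)" "c = expvec (a',b',c') (\<rho> 2)"
    by (metis expvec_simps(1), metis expvec_simps(2) One_nat_def, metis expvec_simps(3))
  ultimately have "a + b + c = a' + b' + c'" by (simp add: sum03)
  with 1 show ?thesis by simp
qed

lemma orbit_unique:
  assumes "lam \<in> Part3 l n" "mu \<in> Part3 l' n'" "e \<in> orbit lam" "e \<in> orbit mu"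
  shows "lam = mu"
proof -
  obtain a b c where l: "lam = (a,b,c)" by (cases lam) auto
  obtain a' b' c' where m: "mu = (a',b',c')" by (cases mu) auto
  have s1: "a \<ge> b" "b \<ge> c" "a' \<ge> b'" "b' \<ge> c'" using assms(1,2) l m unfolding Part3_def by auto
  obtain \<sigma> where s: "\<sigma> permutes {0..<3}" "e = expvec lam \<circ> \<sigma>" using assms(3) unfolding orbit_def by auto
  obtain \<tau> where t: "\<tau> permutes {0..<3}" "e = expvec mu \<circ> \<tau>" using assms(4) unfolding orbit_def by auto
  have st: "expvec lam \<circ> \<sigma> = expvec mu \<circ> \<tau>" using s t by simp
  have "expvec lam = (expvec lam \<circ> \<sigma>) \<circ> inv \<sigma>" by (simp add: comp_assoc permutes_inv_o(1)[OF s(1)])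
  also have "\<dots> = expvec mu \<circ> (\<tau> \<circ> inv \<sigma>)" by (simp add: st comp_assoc)
  finally have r1: "expvec lam = expvec mu \<circ> (\<tau> \<circ> inv \<sigma>)" .
  have p1: "\<tau> \<circ> inv \<sigma> permutes {0..<3}" using t(1) permutes_inv[OF s(1)] permutes_compose by blast
  have "expvec mu = (expvec mu \<circ> \<tau>) \<circ> inv \<tau>" by (simp add: comp_assoc permutes_inv_o(1)[OF t(1)])
  also have "\<dots> = expvec lam \<circ> (\<sigma> \<circ> inv \<tau>)" by (metis st comp_assoc)
  finally have r2: "expvec mu = expvec lam \<circ> (\<sigma> \<circ> inv \<tau>)" .
  have p2: "\<sigma> \<circ> inv \<tau> permutes {0..<3}" using s(1) permutes_inv[OF t(1)] permutes_compose by blast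
  have A: "a \<le> a' \<and> c' \<le> c \<and> a + b + c = a' + b' + c'"
    using orbit_unique_aux[OF p1 _ s1(3,4)] r1 l m by simp
  have B: "a' \<le> a \<and> c \<le> c' \<and> a' + b' + c' = a + b + c"
    using orbit_unique_aux[OF p2 _ s1(1,2)] r2 l m by simp
  from A B show ?thesis using l m by simp
qed

lemma orbit_exists:
  assumes "e \<in> mons d j" "d \<ge> 1"
  shows "\<exists>lam\<in>Part3 (d - 1) (int j). e \<in> orbit lam"
proof -
  have e3: "\<forall>i\<ge>3. e i = 0" and ed: "e 0 < d" "e 1 < d" "e 2 < d" and es: "e 0 + e 1 + e 2 = j"
    using assms unfolding mons_def by auto
  have ext3: "e = expvec lam \<circ> \<sigma>" if "e 0 = expvec lam (\<sigma> 0)" "e 1 = expvec lam (\<sigma> 1)"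
     "e 2 = expvec lam (\<sigma> 2)" "\<sigma> permutes {0..<3}" for lam \<sigma>
  proof
    fix i show "e i = (expvec lam \<circ> \<sigma>) i"
    proof (cases "i < 3")
      case True then have "i = 0 \<or> i = 1 \<or> i = 2" by auto
      then show ?thesis using that by auto
    next
      case False
      then have "\<sigma> i = i" using permutes_not_in[OF that(4)] by auto
      then show ?thesis using False e3 by (cases lam) (auto simp: expvec_def)
    qed
  qed
  have mk: "e \<in> orbit lam" if "e = expvec lam \<circ> \<sigma>" "\<sigma> permutes {0..<3}" for lam \<sigma>
    using that unfolding orbit_def by blast
  have P: "(a,b,c) \<in> Part3 (d - 1) (int j)" if "a \<ge> b" "b \<ge> c" "a < d" "a + b + c = j" for a b c
    using that unfolding Part3_def by auto
  have t01: "transpose 0 1 permutes {0..<3::nat}" by (rule permutes_swap_id) auto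
  have t12: "transpose 1 2 permutes {0..<3::nat}" by (rule permutes_swap_id) auto
  have t02: "transpose 0 2 permutes {0..<3::nat}" by (rule permutes_swap_id) auto
  have c1: "transpose 0 1 \<circ> transpose 0 2 permutes {0..<3::nat}" using t01 t02 permutes_compose by blast
  have c2: "transpose 0 2 \<circ> transpose 0 1 permutes {0..<3::nat}" using t01 t02 permutes_compose by blast
  have idp: "id permutes {0..<3::nat}" by (rule permutes_id)
  consider "e 0 \<ge> e 1" "e 1 \<ge> e 2" | "e 1 \<ge> e 0" "e 0 \<ge> e 2" | "e 0 \<ge> e 2" "e 2 \<ge> e 1"
    | "e 2 \<ge> e 1" "e 1 \<ge> e 0" | "e 1 \<ge> e 2" "e 2 \<ge> e 0" | "e 2 \<ge> e 0" "e 0 \<ge> e 1" by linarith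
  then show ?thesis
  proof cases
    case 1
    have "e = expvec (e 0, e 1, e 2) \<circ> id" by (rule ext3[OF _ _ _ idp]) (auto simp: numeral_2_eq_2)
    then have "e \<in> orbit (e 0, e 1, e 2)" by (rule mk[OF _ idp])
    moreover have "(e 0, e 1, e 2) \<in> Part3 (d - 1) (int j)" by (rule P) (use 1 ed es in auto)
    ultimately show ?thesis by blast
  next
    case 2
    have "e = expvec (e 1, e 0, e 2) \<circ> transpose 0 1" by (rule ext3[OF _ _ _ t01]) (auto simp: numeral_2_eq_2 transpose_def)
    then have "e \<in> orbit (e 1, e 0, e 2)" by (rule mk[OF _ t01])
    moreover have "(e 1, e 0, e 2) \<in> Part3 (d - 1) (int j)" by (rule P) (use 2 ed es in auto)
    ultimately show ?thesis by blast
  next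
    case 3
    have "e = expvec (e 0, e 2, e 1) \<circ> transpose 1 2" by (rule ext3[OF _ _ _ t12]) (auto simp: numeral_2_eq_2 transpose_def)
    then have "e \<in> orbit (e 0, e 2, e 1)" by (rule mk[OF _ t12])
    moreover have "(e 0, e 2, e 1) \<in> Part3 (d - 1) (int j)" by (rule P) (use 3 ed es in auto)
    ultimately show ?thesis by blast
  next
    case 4
    have "e = expvec (e 2, e 1, e 0) \<circ> transpose 0 2" by (rule ext3[OF _ _ _ t02]) (auto simp: numeral_2_eq_2 transpose_def)
    then have "e \<in> orbit (e 2, e 1, e 0)" by (rule mk[OF _ t02])
    moreover have "(e 2, e 1, e 0) \<in> Part3 (d - 1) (int j)" by (rule P) (use 4 ed es in auto)
    ultimately show ?thesis by blast
  next
    case 5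
    have "e = expvec (e 1, e 2, e 0) \<circ> (transpose 0 1 \<circ> transpose 0 2)" by (rule ext3[OF _ _ _ c1]) (auto simp: numeral_2_eq_2 transpose_def)
    then have "e \<in> orbit (e 1, e 2, e 0)" by (rule mk[OF _ c1])
    moreover have "(e 1, e 2, e 0) \<in> Part3 (d - 1) (int j)" by (rule P) (use 5 ed es in auto)
    ultimately show ?thesis by blast
  next
    case 6
    have "e = expvec (e 2, e 0, e 1) \<circ> (transpose 0 2 \<circ> transpose 0 1)" by (rule ext3[OF _ _ _ c2]) (auto simp: numeral_2_eq_2 transpose_def)
    then have "e \<in> orbit (e 2, e 0, e 1)" by (rule mk[OF _ c2])
    moreover have "(e 2, e 0, e 1) \<in> Part3 (d - 1) (int j)" by (rule P) (use 6 ed es in auto)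
    ultimately show ?thesis by blast
  qed
qed



abbreviation Ssum :: "nat \<Rightarrow> nat \<Rightarrow> (nat \<times> nat \<times> nat \<Rightarrow> 'k::field) \<Rightarrow> (nat \<Rightarrow> nat) \<Rightarrow> 'k" where
  "Ssum d j \<alpha> \<equiv> (\<lambda>e. \<Sum>lam\<in>Part3 (d - 1) (int j). \<alpha> lam * orbsum lam e)"

lemma eval_sum:
  assumes "l0 \<in> Part3 l n" "e \<in> orbit l0"
  shows "(\<Sum>lam\<in>Part3 l n. \<alpha> lam * (orbsum lam e :: 'k::field)) = \<alpha> l0"
proof -
  have "(\<Sum>lam\<in>Part3 l n. \<alpha> lam * orbsum lam e) = (\<Sum>lam\<in>Part3 l n. if lam = l0 then \<alpha> lam else 0)"
  proof (rule sum.cong)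
    fix lam assume "lam \<in> Part3 l n"
    then show "\<alpha> lam * orbsum lam e = (if lam = l0 then \<alpha> lam else 0)"
    proof (cases "lam = l0")
      case True then show ?thesis using assms(2) by (simp add: orbsum_orbit)
    next
      case False
      then have "e \<notin> orbit lam" using orbit_unique[OF \<open>lam \<in> Part3 l n\<close> assms(1) _ assms(2)] by blast
      then show ?thesis using False by (simp add: orbsum_orbit)
    qed
  qed simp
  also have "\<dots> = \<alpha> l0" using assms(1) finite_Part3 by simp
  finally show ?thesis .
qed

lemma eval_sum0:
  assumes "\<forall>lam\<in>Part3 l n. e \<notin> orbit lam"
  shows "(\<Sum>lam\<in>Part3 l n. \<alpha> lam * (orbsum lam e :: 'k::field)) = 0"
  using assms by (auto simp: orbsum_orbit intro!: sum.neutral)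

lemma expvec_in_orbit: "expvec lam \<in> orbit lam"
proof -
  have "expvec lam = expvec lam \<circ> id" by simp
  then show ?thesis unfolding orbit_def using permutes_id by blast
qed

lemma Ssum_Adeg: assumes "d \<ge> 1" shows "Ssum d j \<alpha> \<in> Adeg d j"
  unfolding Adeg_def using orbit_mons[OF _ assms] by (auto intro!: eval_sum0)

lemma Ssum_inv: "S3_invariant (Ssum d j \<alpha>)"
  unfolding S3_invariant_def perm_act_def by (auto simp: fun_eq_iff orbsum_orbit orbit_perm_iff)

lemma part1:
  assumes "d \<ge> 1" "P \<in> Adeg d j"
  shows "S3_invariant P \<longleftrightarrow> (\<exists>\<alpha>. P = Ssum d j \<alpha>)"
proof
  assume inv: "S3_invariant P"
  show "\<exists>\<alpha>. P = Ssum d j \<alpha>"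
  proof (intro exI[of _ "\<lambda>lam. P (expvec lam)"] ext)
    fix e
    show "P e = Ssum d j (\<lambda>lam. P (expvec lam)) e"
    proof (cases "e \<in> mons d j")
      case True
      then obtain l0 where l0: "l0 \<in> Part3 (d - 1) (int j)" "e \<in> orbit l0" using orbit_exists assms by blast
      then obtain \<sigma> where s: "\<sigma> permutes {0..<3}" "e = expvec l0 \<circ> \<sigma>" unfolding orbit_def by auto
      have "P e = perm_act \<sigma> P (expvec l0)" using s unfolding perm_act_def by simp
      also have "\<dots> = P (expvec l0)" using inv s(1) unfolding S3_invariant_def by simp
      finally show ?thesis using eval_sum[OF l0, of "\<lambda>lam. P (expvec lam)"] by simp
    next
      case False
      then have "P e = 0" using assms(2) unfolding Adeg_def by auto
      moreover have "\<forall>lam\<in>Part3 (d - 1) (int j). e \<notin> orbit lam" using orbit_mons[OF _ assms(1)] False by blast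
      ultimately show ?thesis using eval_sum0 by metis
    qed
  qed
next
  assume "\<exists>\<alpha>. P = Ssum d j \<alpha>"
  then show "S3_invariant P" using Ssum_inv by metis
qed

lemma orbsum_expvec: "lam \<in> Part3 l n \<Longrightarrow> mu \<in> Part3 l n \<Longrightarrow> (orbsum mu (expvec lam) :: 'k::field) = (if mu = lam then 1 else 0)"
  using orbit_unique[of lam l n mu l n "expvec lam"] expvec_in_orbit
  by (auto simp: orbsum_orbit)

lemma inj_orbsum: "inj_on (orbsum :: _ \<Rightarrow> _ \<Rightarrow> 'k::field) (Part3 l n)"
proof
  fix x y assume xy: "x \<in> Part3 l n" "y \<in> Part3 l n" "(orbsum x :: _ \<Rightarrow> 'k) = orbsum y"
  then have "(orbsum x (expvec x) :: 'k) = orbsum y (expvec x)" by simp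
  then show "x = y" using orbsum_expvec[OF xy(1) xy(1), where 'k='k] orbsum_expvec[OF xy(1) xy(2), where 'k='k] by (auto split: if_splits)
qed

lemma sum_fscale_orbsum:
  "(\<Sum>v\<in>(orbsum ` Part3 l n :: ((nat \<Rightarrow> nat) \<Rightarrow> 'k::field) set). fscale (u v) v)
    = (\<lambda>e. \<Sum>lam\<in>Part3 l n. u (orbsum lam) * orbsum lam e)"
proof -
  have "(\<Sum>v\<in>(orbsum ` Part3 l n :: ((nat \<Rightarrow> nat) \<Rightarrow> 'k) set). fscale (u v) v)
     = (\<Sum>lam\<in>Part3 l n. fscale (u (orbsum lam)) (orbsum lam))"
    by (rule sum.reindex_cong[OF inj_orbsum]) auto
  then show ?thesis by (simp add: fun_eq_iff sum_app fscale_def)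
qed

lemma span_orbsum:
  "fsv.span (orbsum ` Part3 l n :: ((nat \<Rightarrow> nat) \<Rightarrow> 'k::field) set)
    = {f. \<exists>\<alpha>. f = (\<lambda>e. \<Sum>lam\<in>Part3 l n. \<alpha> lam * orbsum lam e)}"
proof -
  have fin: "finite (orbsum ` Part3 l n :: ((nat \<Rightarrow> nat) \<Rightarrow> 'k) set)" using finite_Part3 by simp
  show ?thesis
  proof (auto simp: fsv.span_finite[OF fin] sum_fscale_orbsum)
    fix \<alpha> :: "_ \<Rightarrow> 'k"
    let ?u = "\<lambda>v. \<alpha> (inv_into (Part3 l n) (orbsum :: _ \<Rightarrow> _ \<Rightarrow> 'k) v)"
    have "(\<lambda>e. \<Sum>lam\<in>Part3 l n. \<alpha> lam * orbsum lam e) = (\<lambda>e. \<Sum>lam\<in>Part3 l n. ?u (orbsum lam) * (orbsum lam e :: 'k))"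
      using inv_into_f_f[OF inj_orbsum[where 'k='k]] by (auto simp: fun_eq_iff intro!: sum.cong)
    then show "(\<lambda>e. \<Sum>lam\<in>Part3 l n. \<alpha> lam * orbsum lam e) \<in> range (\<lambda>(u :: ((nat \<Rightarrow> nat) \<Rightarrow> 'k) \<Rightarrow> 'k) e. \<Sum>lam\<in>Part3 l n. u (orbsum lam) * (orbsum lam e :: 'k))"
      by (intro image_eqI[where x = ?u]) simp_all
  qed
qed

lemma indep_orbsum: "fsv.independent (orbsum ` Part3 l n :: ((nat \<Rightarrow> nat) \<Rightarrow> 'k::field) set)"
proof (rule fsv.independent_if_scalars_zero)
  show "finite (orbsum ` Part3 l n :: ((nat \<Rightarrow> nat) \<Rightarrow> 'k) set)" using finite_Part3 by simp
  fix u and x :: "(nat \<Rightarrow> nat) \<Rightarrow> 'k" assume s: "(\<Sum>x\<in>(orbsum ` Part3 l n :: ((nat \<Rightarrow> nat) \<Rightarrow> 'k) set). fscale (u x) x) = 0"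
    and x: "x \<in> orbsum ` Part3 l n"
  then obtain l0 where l0: "l0 \<in> Part3 l n" "x = orbsum l0" by auto
  have "0 = (\<lambda>e. \<Sum>lam\<in>Part3 l n. u (orbsum lam) * orbsum lam e) (expvec l0)"
    using s[unfolded sum_fscale_orbsum] by (simp add: fun_eq_iff)
  also have "\<dots> = u (orbsum l0)" using eval_sum[OF l0(1) expvec_in_orbit, of "\<lambda>lam. u (orbsum lam)"] by simp
  finally show "u x = 0" using l0 by simp
qed

lemma dim_span_orbsum: "fsv.dim (fsv.span (orbsum ` Part3 l n :: ((nat \<Rightarrow> nat) \<Rightarrow> 'k::field) set)) = p3 l n"
  using fsv.dim_span_eq_card_independent[OF indep_orbsum] card_image[OF inj_orbsum]
  unfolding p3_def by metis

lemma Inv_span: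
  assumes "d \<ge> 1"
  shows "{f. f \<in> Adeg d j \<and> S3_invariant f} = fsv.span (orbsum ` Part3 (d - 1) (int j) :: ((nat \<Rightarrow> nat) \<Rightarrow> 'k::field) set)"
  unfolding span_orbsum using part1[OF assms] Ssum_Adeg[OF assms] Ssum_inv by blast



definition Fop :: "nat \<Rightarrow> ((nat \<Rightarrow> nat) \<Rightarrow> 'k::field) \<Rightarrow> ((nat \<Rightarrow> nat) \<Rightarrow> 'k)" where
  "Fop d f = (\<lambda>e. \<Sum>k<3. if 0 < e k \<and> e k < d then f (e(k := e k - 1)) else 0)"

lemma linear_Eop: "Vector_Spaces.linear fscale fscale (Eop d :: ((nat \<Rightarrow> nat) \<Rightarrow> 'k::field) \<Rightarrow> _)"
  unfolding Vector_Spaces.linear_iff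
  by (auto simp: fsv.vector_space_axioms Eop_def fscale_def fun_eq_iff algebra_simps sum.distrib sum_distrib_left)

lemma linear_Fop: "Vector_Spaces.linear fscale fscale (Fop d :: ((nat \<Rightarrow> nat) \<Rightarrow> 'k::field) \<Rightarrow> _)"
proof -
  have add: "Fop d (x + y) = Fop d x + Fop d y" for x y :: "(nat \<Rightarrow> nat) \<Rightarrow> 'k"
    unfolding Fop_def plus_fun_def by (rule ext, subst sum.distrib[symmetric], rule sum.cong) auto
  have sc: "Fop d (fscale c x) = fscale c (Fop d x)" for c and x :: "(nat \<Rightarrow> nat) \<Rightarrow> 'k"
    unfolding Fop_def fscale_def by (rule ext, subst sum_distrib_left, rule sum.cong) auto
  show ?thesis unfolding Vector_Spaces.linear_iff using add sc fsv.vector_space_axioms by blast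
qed

lemma Eop_deg: assumes "f \<in> Adeg d (Suc m)" shows "Eop d f \<in> Adeg d m"
  unfolding Adeg_def
proof (intro CollectI allI impI)
  fix e assume e: "e \<notin> mons d m"
  have "f (e(k := e k + 1)) = 0 \<or> (e k + 1) * (d - (e k + 1)) = 0" if "k < 3" for k
  proof (cases "e(k := e k + 1) \<in> mons d (Suc m)")
    case True
    have kc: "k = 0 \<or> k = 1 \<or> k = 2" using that by auto
    from True have T: "\<forall>i\<ge>3. (e(k := e k + 1)) i = 0" "\<forall>i<3. (e(k := e k + 1)) i < d"
      "(e(k := e k + 1)) 0 + (e(k := e k + 1)) 1 + (e(k := e k + 1)) 2 = Suc m" unfolding mons_def by auto
    have A: "\<forall>i\<ge>3. e i = 0"
    proof (intro allI impI)
      fix i :: nat assume i: "3 \<le> i" then have "i \<noteq> k" using that by auto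
      then show "e i = 0" using T(1) i by (metis fun_upd_other)
    qed
    have B: "\<forall>i<3. e i < d"
    proof (intro allI impI)
      fix i :: nat assume i: "i < 3"
      then have "(e(k := e k + 1)) i < d" using T(2) by blast
      then show "e i < d" by (cases "i = k") auto
    qed
    have "e 0 + e 1 + e 2 = m" using kc T(3) by auto
    then have "e \<in> mons d m" using A B unfolding mons_def by auto
    then show ?thesis using e by auto
  next
    case False then show ?thesis using assms unfolding Adeg_def by auto
  qed
  note * = this
  show "Eop d f e = 0" unfolding Eop_def
  proof (intro sum.neutral ballI)
    fix k assume "k \<in> {..<(3::nat)}"
    then have "f (e(k := e k + 1)) = 0 \<or> (e k + 1) * (d - (e k + 1)) = 0" using * by auto
    then show "of_nat ((e k + 1) * (d - (e k + 1))) * f (e(k := e k + 1)) = 0"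
      by (elim disjE) (simp, metis mult_zero_left of_nat_0)
  qed
qed

lemma Eop_deg0: assumes "f \<in> Adeg d 0" shows "Eop d f = 0"
proof
  fix e
  have "f (e(k := e k + 1)) = 0" if "k < 3" for k
  proof -
    have "k = 0 \<or> k = 1 \<or> k = 2" using that by auto
    then have "e(k := e k + 1) \<notin> mons d 0" unfolding mons_def by auto
    then show ?thesis using assms unfolding Adeg_def by auto
  qed
  then show "Eop d f e = 0 e" unfolding Eop_def by (auto intro!: sum.neutral)
qed

lemma Fop_deg: assumes "f \<in> Adeg d m" shows "Fop d f \<in> Adeg d (Suc m)"
  unfolding Adeg_def
proof (intro CollectI allI impI)
  fix e assume e: "e \<notin> mons d (Suc m)"
  have "(if 0 < e k \<and> e k < d then f (e(k := e k - 1)) else 0) = 0" if "k < 3" for k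
  proof (cases "0 < e k \<and> e k < d")
    case True
    have "e(k := e k - 1) \<notin> mons d m"
    proof
      assume M: "e(k := e k - 1) \<in> mons d m"
      have kc: "k = 0 \<or> k = 1 \<or> k = 2" using that by auto
      from M have T: "\<forall>i\<ge>3. (e(k := e k - 1)) i = 0" "\<forall>i<3. (e(k := e k - 1)) i < d"
        "(e(k := e k - 1)) 0 + (e(k := e k - 1)) 1 + (e(k := e k - 1)) 2 = m" unfolding mons_def by auto
      have A: "\<forall>i\<ge>3. e i = 0"
      proof (intro allI impI)
        fix i :: nat assume i: "3 \<le> i" then have "i \<noteq> k" using that by auto
        then show "e i = 0" using T(1) i by (metis fun_upd_other)
      qed
      have B: "\<forall>i<3. e i < d"
      proof (intro allI impI)
        fix i :: nat assume i: "i < 3"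
        then have "(e(k := e k - 1)) i < d" using T(2) by blast
        then show "e i < d" using True by (cases "i = k") auto
      qed
      have "e 0 + e 1 + e 2 = Suc m" using kc T(3) True by auto
      then show False using A B e unfolding mons_def by auto
    qed
    then show ?thesis using assms unfolding Adeg_def by auto
  qed auto
  then show "Fop d f e = 0" unfolding Fop_def by (intro sum.neutral) auto
qed

lemma Fop_zero: "Fop d 0 = 0" by (simp add: Fop_def fun_eq_iff zero_fun_def)

lemma comp_upd: "inj \<sigma> \<Longrightarrow> (e \<circ> \<sigma>)(k := v) = (e(\<sigma> k := v)) \<circ> \<sigma>"
  by (auto simp: fun_eq_iff inj_eq)

lemma perm_sum:
  assumes "\<sigma> permutes {0..<3}"
  shows "(\<Sum>k<(3::nat). \<Phi> ((e \<circ> \<sigma>) k) ((e \<circ> \<sigma>)(k := h ((e \<circ> \<sigma>) k)))) =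
         (\<Sum>k<(3::nat). \<Phi> (e k) ((e(k := h (e k))) \<circ> \<sigma>) :: 'k::comm_monoid_add)"
proof -
  have inj: "inj \<sigma>" using assms permutes_inj by auto
  have "(\<Sum>k<(3::nat). \<Phi> ((e \<circ> \<sigma>) k) ((e \<circ> \<sigma>)(k := h ((e \<circ> \<sigma>) k))))
     = (\<Sum>k\<in>{0..<3}. ((\<lambda>k'. \<Phi> (e k') ((e(k' := h (e k'))) \<circ> \<sigma>)) \<circ> \<sigma>) k)"
    by (simp add: comp_upd[OF inj] lessThan_atLeast0)
  also have "\<dots> = (\<Sum>k\<in>{0..<3}. \<Phi> (e k) ((e(k := h (e k))) \<circ> \<sigma>))"
    using sum.permute[OF assms, symmetric] by simp
  finally show ?thesis by (simp add: lessThan_atLeast0)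
qed

lemma Eop_perm: assumes "\<sigma> permutes {0..<3}" shows "Eop d (perm_act \<sigma> f) = perm_act \<sigma> (Eop d f)"
proof
  fix e
  show "Eop d (perm_act \<sigma> f) e = perm_act \<sigma> (Eop d f) e"
    unfolding Eop_def perm_act_def
    using perm_sum[OF assms, of "\<lambda>x e'. of_nat ((x + 1) * (d - (x + 1))) * f e'" e "\<lambda>x. x + 1"]
    by simp
qed

lemma Fop_perm: assumes "\<sigma> permutes {0..<3}" shows "Fop d (perm_act \<sigma> f) = perm_act \<sigma> (Fop d f)"
proof
  fix e
  show "Fop d (perm_act \<sigma> f) e = perm_act \<sigma> (Fop d f) e"
    unfolding Fop_def perm_act_def
    using perm_sum[OF assms, of "\<lambda>x e'. if 0 < x \<and> x < d then f e' else 0" e "\<lambda>x. x - 1"]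
    by simp
qed

lemma Eop_inv: "S3_invariant f \<Longrightarrow> S3_invariant (Eop d f)"
  unfolding S3_invariant_def using Eop_perm by metis

lemma Fop_inv: "S3_invariant f \<Longrightarrow> S3_invariant (Fop d f)"
  unfolding S3_invariant_def using Fop_perm by metis



lemma sum_diag:
  assumes "finite S" "\<And>k l. k \<in> S \<Longrightarrow> l \<in> S \<Longrightarrow> k \<noteq> l \<Longrightarrow> T1 k l = T2 k l"
  shows "(\<Sum>k\<in>S. \<Sum>l\<in>S. T1 k l) = (\<Sum>k\<in>S. \<Sum>l\<in>S. T2 k l) + (\<Sum>k\<in>S. T1 k k - T2 k k :: 'a::ab_group_add)"
proof -
  have "(\<Sum>l\<in>S. T1 k l) = (\<Sum>l\<in>S. T2 k l) + (T1 k k - T2 k k)" if k: "k \<in> S" for k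
  proof -
    have "(\<Sum>l\<in>S. T1 k l) = (\<Sum>l\<in>S. T2 k l + (if l = k then T1 k k - T2 k k else 0))"
      using assms(2)[OF k] by (intro sum.cong) auto
    also have "\<dots> = (\<Sum>l\<in>S. T2 k l) + (T1 k k - T2 k k)"
      using k assms(1) by (simp add: sum.distrib)
    finally show ?thesis .
  qed
  then show ?thesis by (simp add: sum.distrib)
qed

lemma coef_int: "x + 1 \<le> d \<Longrightarrow> (of_nat ((x + 1) * (d - (x + 1))) :: 'k::field) = of_int ((int x + 1) * (int d - int x - 1))"
proof -
  assume "x + 1 \<le> d"
  then obtain m where m: "d = x + 1 + m" using le_Suc_ex by blast
  have "int ((x + 1) * (d - (x + 1))) = (int x + 1) * (int d - int x - 1)" unfolding m by (simp add: algebra_simps)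
  then show ?thesis by (metis of_int_of_nat_eq)
qed

lemma diag_term:
  fixes fe :: "'k::field"
  assumes "fe \<noteq> 0 \<Longrightarrow> x < d"
  shows "of_nat ((x + 1) * (d - (x + 1))) * (if 0 < x + 1 \<and> x + 1 < d then fe else 0)
       - (if 0 < x \<and> x < d then of_nat ((x - 1 + 1) * (d - (x - 1 + 1))) * fe else 0)
       = of_int (int d - 1 - 2 * int x) * fe"
proof (cases "fe = 0")
  case True then show ?thesis by simp
next
  case False
  then have xd: "x < d" using assms by auto
  show ?thesis
  proof (cases "x + 1 < d")
    case True
    then have c1: "(of_nat ((x + 1) * (d - (x + 1))) :: 'k) = of_int ((int x + 1) * (int d - int x - 1))"
      by (intro coef_int) simp
    show ?thesis
    proof (cases "x = 0")
      case True then show ?thesis using c1 \<open>x + 1 < d\<close> by simp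
    next
      case False
      then have c2: "(of_nat ((x - 1 + 1) * (d - (x - 1 + 1))) :: 'k) = of_int ((int (x - 1) + 1) * (int d - int (x - 1) - 1))"
        using xd by (intro coef_int) simp
      have "(int x + 1) * (int d - int x - 1) - (int (x - 1) + 1) * (int d - int (x - 1) - 1) = int d - 1 - 2 * int x"
        using False by (simp add: of_nat_diff algebra_simps)
      then have "(of_int ((int x + 1) * (int d - int x - 1)) :: 'k) - of_int ((int (x - 1) + 1) * (int d - int (x - 1) - 1)) = of_int (int d - 1 - 2 * int x)"
        by (metis of_int_diff)
      then show ?thesis using c1 c2 \<open>x + 1 < d\<close> False xd by (simp add: left_diff_distrib[symmetric])
    qed
  next
    case False
    then have xd1: "x + 1 = d" using xd by simp
    show ?thesis
    proof (cases "x = 0")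
      case True then have "d = 1" using xd1 by simp
      then show ?thesis using True by simp
    next
      case x0: False
      have c2: "(of_nat ((x - 1 + 1) * (d - (x - 1 + 1))) :: 'k) = of_int ((int (x - 1) + 1) * (int d - int (x - 1) - 1))"
        using xd by (intro coef_int) simp
      have "- ((int (x - 1) + 1) * (int d - int (x - 1) - 1)) = int d - 1 - 2 * int x"
        using x0 unfolding xd1[symmetric] by (simp add: of_nat_diff algebra_simps)
      then have "- (of_int ((int (x - 1) + 1) * (int d - int (x - 1) - 1)) :: 'k) = of_int (int d - 1 - 2 * int x)"
        by (metis of_int_minus)
      then show ?thesis using c2 False x0 xd by (simp add: minus_mult_left[symmetric]) (metis minus_mult_left)
    qed
  qed
qed

lemma comm:
  fixes f :: "(nat \<Rightarrow> nat) \<Rightarrow> 'k::field"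
  assumes f: "f \<in> Adeg d n"
  shows "Eop d (Fop d f) e = Fop d (Eop d f) e + of_int (3 * (int d - 1) - 2 * int n) * f e"
proof -
  define a where "a x = (of_nat ((x + 1) * (d - (x + 1))) :: 'k)" for x
  define g where "g x = (0 < x \<and> x < d)" for x
  define T1 where "T1 k l = a (e k) * (if g ((e(k := e k + 1)) l) then f ((e(k := e k + 1))(l := (e(k := e k + 1)) l - 1)) else 0)" for k l
  define T2 where "T2 k l = (if g (e l) then a ((e(l := e l - 1)) k) * f ((e(l := e l - 1))(k := (e(l := e l - 1)) k + 1)) else 0)" for k l
  have EF: "Eop d (Fop d f) e = (\<Sum>k<3. \<Sum>l<3. T1 k l)"
    unfolding Eop_def Fop_def T1_def a_def g_def by (simp add: sum_distrib_left)
  have "Fop d (Eop d f) e = (\<Sum>l<3. \<Sum>k<3. T2 k l)"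
    unfolding Eop_def Fop_def T2_def a_def g_def by (intro sum.cong refl) auto
  also have "\<dots> = (\<Sum>k<3. \<Sum>l<3. T2 k l)" by (rule sum.swap)
  finally have FE: "Fop d (Eop d f) e = (\<Sum>k<3. \<Sum>l<3. T2 k l)" .
  have off: "T1 k l = T2 k l" if "k \<noteq> l" for k l
    using that unfolding T1_def T2_def by (simp add: fun_upd_twist)
  have fe: "f e \<noteq> 0 \<Longrightarrow> e \<in> mons d n" using f unfolding Adeg_def by auto
  have dg: "T1 k k - T2 k k = of_int (int d - 1 - 2 * int (e k)) * f e" if k: "k < 3" for k
  proof -
    have t1: "T1 k k = of_nat ((e k + 1) * (d - (e k + 1))) * (if 0 < e k + 1 \<and> e k + 1 < d then f e else 0)"
      unfolding T1_def a_def g_def by simp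
    have t2: "T2 k k = (if 0 < e k \<and> e k < d then of_nat ((e k - 1 + 1) * (d - (e k - 1 + 1))) * f e else 0)"
    proof (cases "0 < e k")
      case True
      then have "(e(k := e k - 1))(k := (e(k := e k - 1)) k + 1) = e" by auto
      then show ?thesis unfolding T2_def a_def g_def by simp
    next
      case False then show ?thesis unfolding T2_def g_def by simp
    qed
    have "f e \<noteq> 0 \<Longrightarrow> e k < d" using fe k unfolding mons_def by auto
    then show ?thesis unfolding t1 t2 by (rule diag_term)
  qed
  have "(\<Sum>k<3. \<Sum>l<3. T1 k l) = (\<Sum>k<3. \<Sum>l<3. T2 k l) + (\<Sum>k<3. T1 k k - T2 k k)"
    by (rule sum_diag) (auto intro: off)
  also have "(\<Sum>k<3. T1 k k - T2 k k) = (\<Sum>k<3. of_int (int d - 1 - 2 * int (e k)) * f e)"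
    by (intro sum.cong refl dg) auto
  also have "\<dots> = of_int (3 * (int d - 1) - 2 * int n) * f e"
  proof (cases "f e = 0")
    case True then show ?thesis by simp
  next
    case False
    then have "e 0 + e 1 + e 2 = n" using fe unfolding mons_def by auto
    then have nn: "(of_nat n :: 'k) = of_nat (e 0) + of_nat (e 1) + of_nat (e 2)" by (metis of_nat_add)
    show ?thesis by (simp add: sum3 algebra_simps nn)
  qed
  finally show ?thesis using EF FE by simp
qed



lemma fscale_zero_iff: "c \<noteq> 0 \<Longrightarrow> fscale c u = 0 \<longleftrightarrow> u = (0 :: 'a \<Rightarrow> 'k::field)"
  by (auto simp: fscale_def fun_eq_iff)

lemma Eop_fscale: "Eop d (fscale c u) = fscale c (Eop d (u :: (nat \<Rightarrow> nat) \<Rightarrow> 'k::field))"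
  using linear_Eop[of d] unfolding Vector_Spaces.linear_iff by blast

lemma chain:
  fixes u :: "(nat \<Rightarrow> nat) \<Rightarrow> 'k::field_char_0"
  shows "u \<in> Adeg d n \<Longrightarrow> 2 * n \<le> 3 * (d - 1) \<Longrightarrow> (a::nat) > 0 \<Longrightarrow> Fop d (Eop d u) = fscale (- of_nat a) u \<Longrightarrow> u = 0"
proof (induction n arbitrary: u a)
  case 0
  have h0: "Fop d (Eop d u) = 0" using Eop_deg0[OF 0(1)] Fop_zero by simp
  have z: "fscale (- of_nat a) u = 0" using trans[OF 0(4)[symmetric] h0] .
  have ne: "(- of_nat a :: 'k) \<noteq> 0" using 0(3) by simp
  show ?case using z fscale_zero_iff[OF ne] by blast
next
  case (Suc n)
  define w where "w = Eop d u"
  have w: "w \<in> Adeg d n" using Eop_deg Suc.prems(1) w_def by blast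
  have d2: "2 * n \<le> 3 * (d - 1)" using Suc.prems(2) by simp
  define c where "c = 3 * (d - 1) - 2 * n"
  have cint: "(of_int (3 * (int d - 1) - 2 * int n) :: 'k) = of_nat c"
  proof -
    have "d \<ge> 1" using Suc.prems(2) by simp
    then have "int c = 3 * (int d - 1) - 2 * int n" unfolding c_def using d2 by (simp add: of_nat_diff)
    then show ?thesis by (metis of_int_of_nat_eq)
  qed
  have A: "Eop d (Fop d w) = fscale (- of_nat a) w" unfolding w_def Suc.prems(4) Eop_fscale ..
  have "Fop d (Eop d w) = fscale (- of_nat (a + c)) w"
  proof (rule ext)
    fix e
    have "Eop d (Fop d w) e = - of_nat a * w e" using A by (simp add: fscale_def)
    moreover have "Eop d (Fop d w) e = Fop d (Eop d w) e + of_nat c * w e"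
      using comm[OF w, of e] cint by simp
    ultimately have "Fop d (Eop d w) e = - of_nat a * w e - of_nat c * w e" by (simp add: eq_diff_eq)
    then show "Fop d (Eop d w) e = fscale (- of_nat (a + c)) w e" by (simp add: fscale_def algebra_simps)
  qed
  note FEw = this
  have "0 < a + c" using Suc.prems(3) by simp
  from Suc.IH[OF w d2 this FEw] have "w = 0" .
  then have h0: "Fop d (Eop d u) = 0" using w_def Fop_zero by simp
  have z: "fscale (- of_nat a) u = 0" using trans[OF Suc.prems(4)[symmetric] h0] .
  have ne: "(- of_nat a :: 'k) \<noteq> 0" using Suc.prems(3) by simp
  show ?case using z fscale_zero_iff[OF ne] by blast
qed

lemma EF_inj:
  fixes v :: "(nat \<Rightarrow> nat) \<Rightarrow> 'k::field_char_0"
  assumes "v \<in> Adeg d m" "2 * m + 2 \<le> 3 * (d - 1)" "Eop d (Fop d v) = 0"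
  shows "v = 0"
proof -
  define c where "c = 3 * (d - 1) - 2 * m"
  have c0: "c > 0" using assms(2) c_def by simp
  have cint: "(of_int (3 * (int d - 1) - 2 * int m) :: 'k) = of_nat c"
  proof -
    have "d \<ge> 1" using assms(2) by simp
    then have "int c = 3 * (int d - 1) - 2 * int m" unfolding c_def using assms(2) by (simp add: of_nat_diff)
    then show ?thesis by (metis of_int_of_nat_eq)
  qed
  have "Fop d (Eop d v) = fscale (- of_nat c) v"
  proof (rule ext)
    fix e
    have "Eop d (Fop d v) e = 0" using assms(3) by simp
    moreover have "Eop d (Fop d v) e = Fop d (Eop d v) e + of_nat c * v e"
      using comm[OF assms(1), of e] cint by simp
    ultimately have "Fop d (Eop d v) e = - of_nat c * v e" by (simp add: eq_neg_iff_add_eq_0)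
    then show "Fop d (Eop d v) e = fscale (- of_nat c) v e" by (simp add: fscale_def)
  qed
  then show ?thesis using chain[OF assms(1) _ c0] assms(2) by simp
qed



lemma Inv_char:
  assumes "d \<ge> 1"
  shows "x \<in> fsv.span (orbsum ` Part3 (d - 1) (int m) :: ((nat \<Rightarrow> nat) \<Rightarrow> 'k::field) set)
     \<longleftrightarrow> x \<in> Adeg d m \<and> S3_invariant x"
  using Inv_span[OF assms, of m, where 'k='k] by blast

lemma dim_zero_set: "fsv.dim ({0} :: ('a \<Rightarrow> 'k::field) set) = 0"
  using fsv.basis_card_eq_dim[of "{}" "{0 :: 'a \<Rightarrow> 'k}"] fsv.independent_empty by simp

lemma surj_EF:
  assumes d1: "d \<ge> 1" and dm: "2 * m + 2 \<le> 3 * (d - 1)"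
  shows "fsv.span (orbsum ` Part3 (d - 1) (int m) :: ((nat \<Rightarrow> nat) \<Rightarrow> 'k::field_char_0) set)
     \<subseteq> (Eop d \<circ> Fop d) ` fsv.span (orbsum ` Part3 (d - 1) (int m))"
proof -
  define M where "M = (orbsum ` Part3 (d - 1) (int m) :: ((nat \<Rightarrow> nat) \<Rightarrow> 'k) set)"
  define G where "G = (Eop d \<circ> Fop d :: ((nat \<Rightarrow> nat) \<Rightarrow> 'k) \<Rightarrow> _)"
  have lin: "Vector_Spaces.linear fscale fscale G"
    unfolding G_def by (rule Vector_Spaces.linear_compose[OF linear_Fop linear_Eop])
  interpret lG: Vector_Spaces.linear fscale fscale G by (rule lin)
  have finM: "finite M" unfolding M_def using finite_Part3 by simp
  have indM: "fsv.independent M" unfolding M_def by (rule indep_orbsum)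
  have GInv: "G ` fsv.span M \<subseteq> fsv.span M"
  proof
    fix y assume "y \<in> G ` fsv.span M"
    then obtain x where x: "x \<in> fsv.span M" "y = G x" by auto
    then have "x \<in> Adeg d m" "S3_invariant x" using Inv_char[OF d1] unfolding M_def by blast+
    then have "Fop d x \<in> Adeg d (Suc m)" "S3_invariant (Fop d x)" using Fop_deg Fop_inv by blast+
    then have "Eop d (Fop d x) \<in> Adeg d m" "S3_invariant (Eop d (Fop d x))" using Eop_deg Eop_inv by blast+
    then show "y \<in> fsv.span M" using x(2) Inv_char[OF d1] unfolding M_def G_def by auto
  qed
  have ker: "{x \<in> fsv.span M. G x = 0} = {0}"
  proof
    show "{x \<in> fsv.span M. G x = 0} \<subseteq> {0}"
    proof
      fix x assume x: "x \<in> {x \<in> fsv.span M. G x = 0}"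
      then have "x \<in> Adeg d m" using Inv_char[OF d1] unfolding M_def by blast
      moreover have "Eop d (Fop d x) = 0" using x unfolding G_def by simp
      ultimately have "x = 0" using EF_inj dm by blast
      then show "x \<in> {0}" by simp
    qed
    show "{0} \<subseteq> {x \<in> fsv.span M. G x = 0}" using fsv.span_zero lG.zero by auto
  qed
  have "fsv.dim (fsv.span M) = fsv.dim {x \<in> fsv.span M. G x = 0} + fsv.dim (G ` fsv.span M)"
    by (rule fsv.rank_nullity_sub[OF lin finM])
  then have dimG: "fsv.dim (G ` fsv.span M) = card M"
    unfolding ker dim_zero_set using fsv.dim_span_eq_card_independent[OF indM] by simp
  obtain B where B: "B \<subseteq> G ` fsv.span M" "fsv.independent B" "G ` fsv.span M \<subseteq> fsv.span B"
    "card B = fsv.dim (G ` fsv.span M)" using fsv.basis_exists by blast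
  have "fsv.span M \<subseteq> fsv.span B"
    by (rule fsv.span_eq_card[OF finM indM B(2)]) (use B(1) GInv B(4) dimG in auto)
  also have "fsv.span B \<subseteq> G ` fsv.span M"
  proof -
    have "G ` fsv.span M = fsv.span (G ` M)" using lG.span_image by simp
    then show ?thesis using B(1) fsv.span_mono fsv.span_span by metis
  qed
  finally show ?thesis unfolding M_def G_def .
qed

lemma Eop_image:
  assumes d1: "d \<ge> 1" and dm: "2 * m + 2 \<le> 3 * (d - 1)"
  shows "Eop d ` fsv.span (orbsum ` Part3 (d - 1) (int (Suc m)) :: ((nat \<Rightarrow> nat) \<Rightarrow> 'k::field_char_0) set)
     = fsv.span (orbsum ` Part3 (d - 1) (int m))"
proof
  show "Eop d ` fsv.span (orbsum ` Part3 (d - 1) (int (Suc m)) :: ((nat \<Rightarrow> nat) \<Rightarrow> 'k) set)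
     \<subseteq> fsv.span (orbsum ` Part3 (d - 1) (int m))"
  proof
    fix y assume "y \<in> Eop d ` fsv.span (orbsum ` Part3 (d - 1) (int (Suc m)) :: ((nat \<Rightarrow> nat) \<Rightarrow> 'k) set)"
    then obtain x where x: "x \<in> fsv.span (orbsum ` Part3 (d - 1) (int (Suc m)) :: ((nat \<Rightarrow> nat) \<Rightarrow> 'k) set)" "y = Eop d x" by auto
    then have "x \<in> Adeg d (Suc m)" "S3_invariant x" using Inv_char[OF d1] by blast+
    then have "Eop d x \<in> Adeg d m" "S3_invariant (Eop d x)" using Eop_deg Eop_inv by blast+
    then show "y \<in> fsv.span (orbsum ` Part3 (d - 1) (int m))" using x(2) Inv_char[OF d1] by auto
  qed
  have FI: "Fop d ` fsv.span (orbsum ` Part3 (d - 1) (int m) :: ((nat \<Rightarrow> nat) \<Rightarrow> 'k) set)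
     \<subseteq> fsv.span (orbsum ` Part3 (d - 1) (int (Suc m)))"
  proof
    fix y assume "y \<in> Fop d ` fsv.span (orbsum ` Part3 (d - 1) (int m) :: ((nat \<Rightarrow> nat) \<Rightarrow> 'k) set)"
    then obtain x where x: "x \<in> fsv.span (orbsum ` Part3 (d - 1) (int m) :: ((nat \<Rightarrow> nat) \<Rightarrow> 'k) set)" "y = Fop d x" by auto
    then have "x \<in> Adeg d m" "S3_invariant x" using Inv_char[OF d1] by blast+
    then have "Fop d x \<in> Adeg d (Suc m)" "S3_invariant (Fop d x)" using Fop_deg Fop_inv by blast+
    then have "y \<in> Adeg d (Suc m) \<and> S3_invariant y" using x(2) by simp
    then show "y \<in> fsv.span (orbsum ` Part3 (d - 1) (int (Suc m)))" using Inv_char[OF d1, of y "Suc m"] by blast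
  qed
  have "fsv.span (orbsum ` Part3 (d - 1) (int m) :: ((nat \<Rightarrow> nat) \<Rightarrow> 'k) set)
     \<subseteq> (Eop d \<circ> Fop d) ` fsv.span (orbsum ` Part3 (d - 1) (int m))" by (rule surj_EF[OF d1 dm])
  also have "\<dots> = Eop d ` (Fop d ` fsv.span (orbsum ` Part3 (d - 1) (int m)))" by (simp add: image_comp)
  also have "\<dots> \<subseteq> Eop d ` fsv.span (orbsum ` Part3 (d - 1) (int (Suc m)))" using FI by (rule image_mono)
  finally show "fsv.span (orbsum ` Part3 (d - 1) (int m) :: ((nat \<Rightarrow> nat) \<Rightarrow> 'k) set)
     \<subseteq> Eop d ` fsv.span (orbsum ` Part3 (d - 1) (int (Suc m)))" .
qed

lemma Part3_neg: "Part3 l (-1) = {}" unfolding Part3_def by auto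



theorem theorem3p1:
  fixes d j :: nat
  assumes "d \<ge> 3" and "j \<le> (3 * (d - 1)) div 2"
  shows "(\<forall>P :: (nat \<Rightarrow> nat) \<Rightarrow> 'k :: {alg_closed_field, field_char_0}.
            P \<in> Adeg d j \<longrightarrow>
            ((Eop d P = (\<lambda>_. 0) \<and> S3_invariant P) \<longleftrightarrow>
             (Eop d P = (\<lambda>_. 0) \<and> (\<exists>\<alpha> :: nat \<times> nat \<times> nat \<Rightarrow> 'k.
                 P = (\<lambda>e. \<Sum>lam\<in>Part3 (d - 1) (int j). \<alpha> lam * orbsum lam e)))))
         \<and> int (triv TYPE('k) d j) = int (p3 (d - 1) (int j)) - int (p3 (d - 1) (int j - 1))"
proof
  have d1: "d \<ge> 1" using assms(1) by simp
  show "\<forall>P :: (nat \<Rightarrow> nat) \<Rightarrow> 'k.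
            P \<in> Adeg d j \<longrightarrow>
            ((Eop d P = (\<lambda>_. 0) \<and> S3_invariant P) \<longleftrightarrow>
             (Eop d P = (\<lambda>_. 0) \<and> (\<exists>\<alpha> :: nat \<times> nat \<times> nat \<Rightarrow> 'k.
                 P = (\<lambda>e. \<Sum>lam\<in>Part3 (d - 1) (int j). \<alpha> lam * orbsum lam e))))"
    using part1[OF d1] by blast
  define M where "M = (orbsum ` Part3 (d - 1) (int j) :: ((nat \<Rightarrow> nat) \<Rightarrow> 'k) set)"
  have finM: "finite M" unfolding M_def using finite_Part3 by simp
  have K: "{f :: (nat \<Rightarrow> nat) \<Rightarrow> 'k. f \<in> Adeg d j \<and> Eop d f = (\<lambda>_. 0) \<and> S3_invariant f}
      = {x \<in> fsv.span M. Eop d x = 0}"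
    unfolding M_def using Inv_char[OF d1, of _ j, where 'k='k] by (auto simp: zero_fun_def)
  have tr: "triv TYPE('k) d j = fsv.dim {x \<in> fsv.span M. Eop d x = 0}"
    unfolding triv_def K ..
  have RN: "fsv.dim (fsv.span M) = fsv.dim {x \<in> fsv.span M. Eop d x = 0} + fsv.dim (Eop d ` fsv.span M)"
    by (rule fsv.rank_nullity_sub[OF linear_Eop finM])
  have DJ: "fsv.dim (fsv.span M) = p3 (d - 1) (int j)" unfolding M_def by (rule dim_span_orbsum)
  have IMG: "fsv.dim (Eop d ` fsv.span M) = p3 (d - 1) (int j - 1)"
  proof (cases j)
    case 0
    have "Eop d ` fsv.span M = {0}"
    proof
      show "Eop d ` fsv.span M \<subseteq> {0}"
      proof
        fix y assume "y \<in> Eop d ` fsv.span M"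
        then obtain x where x: "x \<in> fsv.span M" "y = Eop d x" by auto
        then have "x \<in> Adeg d 0" using Inv_char[OF d1] 0 unfolding M_def by blast
        then show "y \<in> {0}" using x(2) Eop_deg0 by auto
      qed
      show "{0} \<subseteq> Eop d ` fsv.span M"
      proof -
        have "Eop d 0 = (0 :: (nat \<Rightarrow> nat) \<Rightarrow> 'k)" using Eop_deg0[of 0 d] unfolding Adeg_def by (simp add: zero_fun_def)
        then have "(0 :: (nat \<Rightarrow> nat) \<Rightarrow> 'k) \<in> Eop d ` fsv.span M" using fsv.span_zero[of M] by (metis image_eqI)
        then show ?thesis by simp
      qed
    qed
    then show ?thesis using 0 dim_zero_set by (simp add: p3_def Part3_neg)
  next
    case (Suc m)
    have dm: "2 * m + 2 \<le> 3 * (d - 1)" using assms(2) Suc by simp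
    have "Eop d ` fsv.span M = fsv.span (orbsum ` Part3 (d - 1) (int m))"
      unfolding M_def Suc by (rule Eop_image[OF d1 dm])
    then show ?thesis using dim_span_orbsum Suc by simp
  qed
  show "int (triv TYPE('k) d j) = int (p3 (d - 1) (int j)) - int (p3 (d - 1) (int j - 1))"
    using RN DJ IMG tr by simp
qed

end
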